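(* Let $p\ge 2$, $\alpha=p-1$, $0<R<\infty$, $\theta\ge\alpha$, $0\le\nu<\lambda_{\alpha,\theta}$. For each $\varepsilon\in(0,\mu_{\alpha,\theta})$ let $u_\varepsilon\in X^{1,p}_R(\alpha,\theta)\cap C^1[0,R]$ be nonnegative and nonincreasing with $H_\nu(u_\varepsilon)=1$ and $\int_0^R e^{\mu_\varepsilon u_\varepsilon^{p/(p-1)}}\mathrm d\lambda_\theta=S_\varepsilon(p,\nu,\theta,R)$, and let $\lambda_\varepsilon=\int_0^R e^{\mu_\varepsilon u_\varepsilon^{p/(p-1)}}u_\varepsilon^{p/(p-1)}\mathrm d\lambda_\theta$. Suppose that along a sequence $\varepsilon\to0$ we have $u_\varepsilon\to0$ in $L^q_\theta$ for every $q>1$ and $a_\varepsilon:=u_\varepsilon(0)\to+\infty$. Define $r_\varepsilon>0$ by $$r_\varepsilon^{\theta+1}=\frac{\lambda_\varepsilon}{a_\varepsilon^{\frac p{p-1}}e^{\mu_\varepsilon a_\varepsilon^{\frac p{p-1}}}}.$$ Then for every $\eta<\mu_{\alpha,\theta}$, $r_\varepsilon^{\theta+1}a_\varepsilon^{\frac p{p-1}}e^{\eta a_\varepsilon^{\frac p{p-1}}}\to0$ as $\varepsilon\to0$. In particular $r_\varepsilon^{\theta+1}\to0$.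
   Context: For $s\ge 0$ let $\omega_s=\frac{2\pi^{s/2}}{\Gamma(s/2)}$ and let $\mathrm d\lambda_s=\omega_s r^s\,\mathrm dr$ on $(0,R)$; $L^q_s=L^q((0,R),\mathrm d\lambda_s)$. The space $X^{1,p}_R(\alpha,\theta)$ is the completion of the set of all $u\in AC_{loc}(0,R)$ with $\lim_{r\to R}u(r)=0$, $u\in L^p_\theta$, $u'\in L^p_\alpha$, with respect to the norm $\|u\|=(\|u\|^p_{L^p_\theta}+\|u'\|^p_{L^p_\alpha})^{1/p}$. Set $\mu_{\alpha,\theta}=(\theta+1)\omega_\alpha^{1/\alpha}$, $\lambda_{\alpha,\theta}=\inf_{u\in X^{1,p}_R(\alpha,\theta)\setminus\{0\}}\|u'\|^p_{L^p_\alpha}/\|u\|^p_{L^p_\theta}$, and $H_\nu(u)=(\|u'\|^p_{L^p_\alpha}-\nu\|u\|^p_{L^p_\theta})^{1/p}$. Let $\mu_\varepsilon=\mu_{\alpha,\theta}-\varepsilon$ and $S_\varepsilon(p,\nu,\theta,R)=\sup_{u\in X^{1,p}_R(\alpha,\theta),\,H_\nu(u)\le1}\int_0^R e^{\mu_\varepsilon|u|^{p/(p-1)}}\mathrm d\lambda_\theta$. *)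

theory Defs
  imports "HOL-Analysis.Analysis"
begin

definition omega :: "real \<Rightarrow> real" where
  "omega s = 2 * pi powr (s / 2) / Gamma (s / 2)"

definition lam :: "real \<Rightarrow> real \<Rightarrow> real measure" where
  "lam s R = density (restrict_space lebesgue {0<..<R}) (\<lambda>r. ennreal (omega s * r powr s))"

definition Lpow :: "real \<Rightarrow> real \<Rightarrow> real \<Rightarrow> (real \<Rightarrow> real) \<Rightarrow> real" where
  "Lpow q s R u = integral\<^sup>L (lam s R) (\<lambda>r. \<bar>u r\<bar> powr q)"

definition abs_cont_on :: "real set \<Rightarrow> (real \<Rightarrow> real) \<Rightarrow> bool" where
  "abs_cont_on S f \<longleftrightarrow>
     (\<forall>e>0. \<exists>d>0. \<forall>(n::nat) (a::nat \<Rightarrow> real) (b::nat \<Rightarrow> real).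
        (\<forall>i<n. a i \<le> b i \<and> {a i..b i} \<subseteq> S) \<and>
        (\<forall>i<n. \<forall>j<n. i \<noteq> j \<longrightarrow> b i \<le> a j \<or> b j \<le> a i) \<and>
        (\<Sum>i<n. b i - a i) < d
        \<longrightarrow> (\<Sum>i<n. \<bar>f (b i) - f (a i)\<bar>) < e)"

definition AC_loc :: "real \<Rightarrow> (real \<Rightarrow> real) \<Rightarrow> bool" where
  "AC_loc R u \<longleftrightarrow> (\<forall>a b. 0 < a \<longrightarrow> a \<le> b \<longrightarrow> b < R \<longrightarrow> abs_cont_on {a..b} u)"

text \<open>The space X^{1,p}_R(alpha,theta). The normed space of such functions is already
  complete, so it coincides with its completion. The derivative u' is
  the a.e. derivative \<open>deriv u\<close>.\<close>
definition Xsp :: "real \<Rightarrow> real \<Rightarrow> real \<Rightarrow> real \<Rightarrow> (real \<Rightarrow> real) set" where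
  "Xsp p \<alpha> \<theta> R = {u. AC_loc R u \<and> (u \<longlongrightarrow> 0) (at_left R) \<and>
      integrable (lam \<theta> R) (\<lambda>r. \<bar>u r\<bar> powr p) \<and>
      integrable (lam \<alpha> R) (\<lambda>r. \<bar>deriv u r\<bar> powr p)}"

definition mu :: "real \<Rightarrow> real \<Rightarrow> real" where
  "mu \<alpha> \<theta> = (\<theta> + 1) * omega \<alpha> powr (1 / \<alpha>)"

definition lambda1 :: "real \<Rightarrow> real \<Rightarrow> real \<Rightarrow> real \<Rightarrow> real" where
  "lambda1 p \<alpha> \<theta> R = Inf {Lpow p \<alpha> R (deriv u) / Lpow p \<theta> R u | u.
      u \<in> Xsp p \<alpha> \<theta> R \<and> (\<exists>r\<in>{0<..<R}. u r \<noteq> 0)}"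

definition H :: "real \<Rightarrow> real \<Rightarrow> real \<Rightarrow> real \<Rightarrow> real \<Rightarrow> (real \<Rightarrow> real) \<Rightarrow> real" where
  "H p \<alpha> \<theta> R \<nu> u = (Lpow p \<alpha> R (deriv u) - \<nu> * Lpow p \<theta> R u) powr (1 / p)"

definition S :: "real \<Rightarrow> real \<Rightarrow> real \<Rightarrow> real \<Rightarrow> real \<Rightarrow> ennreal" where
  "S p \<nu> \<theta> R \<epsilon> = (SUP u \<in> {u \<in> Xsp p (p - 1) \<theta> R. H p (p - 1) \<theta> R \<nu> u \<le> 1}.
      \<integral>\<^sup>+ r. ennreal (exp ((mu (p - 1) \<theta> - \<epsilon>) * \<bar>u r\<bar> powr (p / (p - 1)))) \<partial>lam \<theta> R)"

end

theory Submission
  imports Defs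
begin

lemma realA:
  fixes t \<eta> \<gamma> Mb :: real
  assumes "0 \<le> t" "0 < Mb" "0 < \<gamma>"
  shows "t * exp (\<eta> * t) \<le> exp (\<bar>\<eta>\<bar> * Mb) * t + 4 / (\<gamma>^2 * Mb) * exp ((\<eta> + \<gamma>) * t)"
proof (cases "t \<le> Mb")
  case True
  have "\<eta> * t \<le> \<bar>\<eta>\<bar> * Mb"
    by (metis True abs_ge_self abs_ge_zero assms(1) mult_mono order_trans)
  then have "t * exp (\<eta> * t) \<le> exp (\<bar>\<eta>\<bar> * Mb) * t"
    using assms(1) by (simp add: mult.commute mult_left_mono)
  moreover have "0 \<le> 4 / (\<gamma>^2 * Mb) * exp ((\<eta> + \<gamma>) * t)" using assms by simp
  ultimately show ?thesis by linarith
next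
  case False
  have e1: "1 + \<gamma> * t / 2 \<le> exp (\<gamma> * t / 2)" by (rule exp_ge_add_one_self)
  have "(\<gamma> * t / 2)^2 \<le> (1 + \<gamma> * t / 2)^2"
    using assms by (intro power_mono) auto
  also have "\<dots> \<le> exp (\<gamma> * t / 2) ^ 2"
    using assms e1 by (intro power_mono) auto
  also have "\<dots> = exp (\<gamma> * t)" by (simp add: exp_double[symmetric])
  finally have h: "\<gamma>^2 * t * t / 4 \<le> exp (\<gamma> * t)" by (simp add: power2_eq_square mult_ac)
  have "\<gamma>^2 * t * Mb / 4 \<le> \<gamma>^2 * t * t / 4"
    using False assms by (intro divide_right_mono mult_left_mono) auto
  with h have "\<gamma>^2 * t * Mb / 4 \<le> exp (\<gamma> * t)" by linarith
  then have "t \<le> 4 / (\<gamma>^2 * Mb) * exp (\<gamma> * t)"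
    using assms by (simp add: field_simps)
  then have "t * exp (\<eta> * t) \<le> 4 / (\<gamma>^2 * Mb) * exp (\<gamma> * t) * exp (\<eta> * t)"
    by (rule mult_right_mono) simp_all
  also have "\<dots> = 4 / (\<gamma>^2 * Mb) * exp ((\<eta> + \<gamma>) * t)"
    by (simp add: exp_add[symmetric] algebra_simps)
  finally show ?thesis using assms by (simp add: add_increasing)
qed

lemma realB:
  fixes x a m \<eta> q :: real
  assumes "0 \<le> x" "x \<le> a" "\<eta> \<le> m" "0 \<le> q"
  shows "exp (m * x powr q) * x powr q * exp ((\<eta> - m) * a powr q) \<le> x powr q * exp (\<eta> * x powr q)"
proof -
  have "x powr q \<le> a powr q" using assms by (simp add: powr_mono2)
  then have "(\<eta> - m) * a powr q \<le> (\<eta> - m) * x powr q"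
    using assms by (simp add: mult_left_mono_neg)
  then have "m * x powr q + (\<eta> - m) * a powr q \<le> \<eta> * x powr q" by (simp add: algebra_simps)
  then have "exp (m * x powr q) * exp ((\<eta> - m) * a powr q) \<le> exp (\<eta> * x powr q)"
    by (simp add: exp_add[symmetric])
  then show ?thesis by (simp add: mult_left_mono mult.commute mult.left_commute)
qed

lemma keyB:
  fixes M :: "'a measure" and v :: "'a \<Rightarrow> real"
  assumes fm: "finite_measure M" and vm: "v \<in> borel_measurable M"
    and vb: "\<And>x. x \<in> space M \<Longrightarrow> 0 \<le> v x \<and> v x \<le> a"
    and a: "0 < a" and \<eta>m: "\<eta> \<le> m" and q: "0 < q" and \<gamma>: "0 < \<gamma>" and Mb: "0 < Mb"
    and B: "0 \<le> B" and nn: "integral\<^sup>N M (\<lambda>x. ennreal (exp ((\<eta> + \<gamma>) * \<bar>v x\<bar> powr q))) \<le> ennreal B"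
  shows "integral\<^sup>L M (\<lambda>x. exp (m * v x powr q) * v x powr q) / (a powr q * exp (m * a powr q))
           * a powr q * exp (\<eta> * a powr q)
         \<le> exp (\<bar>\<eta>\<bar> * Mb) * integral\<^sup>L M (\<lambda>x. \<bar>v x\<bar> powr q) + 4 / (\<gamma>^2 * Mb) * B"
proof -
  interpret finite_measure M by (rule fm)
  let ?f = "\<lambda>x. exp (m * v x powr q) * v x powr q"
  let ?E = "\<lambda>x. exp ((\<eta> + \<gamma>) * \<bar>v x\<bar> powr q)"
  let ?g = "\<lambda>x. exp (\<bar>\<eta>\<bar> * Mb) * \<bar>v x\<bar> powr q + 4 / (\<gamma>^2 * Mb) * ?E x"
  have pa: "0 < a powr q" using a by simp
  have eq: "integral\<^sup>L M ?f / (a powr q * exp (m * a powr q)) * a powr q * exp (\<eta> * a powr q)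
      = integral\<^sup>L M (\<lambda>x. ?f x * exp ((\<eta> - m) * a powr q))"
  proof -
    have c: "exp ((\<eta> - m) * a powr q) = exp (\<eta> * a powr q) / exp (m * a powr q)"
      by (simp add: exp_diff left_diff_distrib)
    have "integral\<^sup>L M (\<lambda>x. ?f x * exp ((\<eta> - m) * a powr q)) = integral\<^sup>L M ?f * exp ((\<eta> - m) * a powr q)"
      by (rule integral_mult_left_zero)
    then show ?thesis using pa unfolding c by (simp add: field_simps)
  qed
  have bnd: "\<bar>v x\<bar> powr q \<le> a powr q" if "x \<in> space M" for x
    using vb[OF that] q by (simp add: powr_mono2)
  have i1: "integrable M (\<lambda>x. \<bar>v x\<bar> powr q)"
    by (rule integrable_const_bound[where B="a powr q"]) (use bnd vm in \<open>auto intro!: AE_I2\<close>)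
  have i2: "integrable M ?E"
  proof (rule integrable_const_bound[where B="exp (\<bar>\<eta> + \<gamma>\<bar> * a powr q)"])
    show "AE x in M. norm (?E x) \<le> exp (\<bar>\<eta> + \<gamma>\<bar> * a powr q)"
    proof (rule AE_I2)
      fix x assume x: "x \<in> space M"
      have "(\<eta> + \<gamma>) * \<bar>v x\<bar> powr q \<le> \<bar>\<eta> + \<gamma>\<bar> * \<bar>v x\<bar> powr q"
        by (simp add: mult_right_mono)
      also have "\<dots> \<le> \<bar>\<eta> + \<gamma>\<bar> * a powr q" using bnd[OF x] by (simp add: mult_left_mono)
      finally show "norm (?E x) \<le> exp (\<bar>\<eta> + \<gamma>\<bar> * a powr q)" by simp
    qed
  qed (use vm in auto)
  have ig: "integrable M ?g" using i1 i2 by auto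
  have "integral\<^sup>L M (\<lambda>x. ?f x * exp ((\<eta> - m) * a powr q)) \<le> integral\<^sup>L M ?g"
  proof (rule integral_mono'[OF ig])
    fix x assume x: "x \<in> space M"
    have vx: "0 \<le> v x" "v x \<le> a" using vb[OF x] by auto
    have "?f x * exp ((\<eta> - m) * a powr q) \<le> v x powr q * exp (\<eta> * v x powr q)"
      using realB[OF vx \<eta>m] q by simp
    also have "\<dots> \<le> ?g x" using realA[of "v x powr q" Mb \<gamma> \<eta>] Mb \<gamma> vx by simp
    finally show "?f x * exp ((\<eta> - m) * a powr q) \<le> ?g x" .
    show "0 \<le> ?g x" using Mb \<gamma> by (intro add_nonneg_nonneg) auto
  qed
  also have "integral\<^sup>L M ?g = exp (\<bar>\<eta>\<bar> * Mb) * integral\<^sup>L M (\<lambda>x. \<bar>v x\<bar> powr q)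
        + 4 / (\<gamma>^2 * Mb) * integral\<^sup>L M ?E"
    using i1 i2 by simp
  also have "\<dots> \<le> exp (\<bar>\<eta>\<bar> * Mb) * integral\<^sup>L M (\<lambda>x. \<bar>v x\<bar> powr q) + 4 / (\<gamma>^2 * Mb) * B"
  proof -
    have "integral\<^sup>L M ?E \<le> B" by (rule integral_real_bounded[OF B nn])
    then show ?thesis using Mb \<gamma> by (intro add_left_mono mult_left_mono) auto
  qed
  finally show ?thesis using eq by simp
qed

theorem lemma3p3:
  fixes p R \<theta> \<nu> :: real
    and u :: "real \<Rightarrow> real \<Rightarrow> real"
    and e :: "nat \<Rightarrow> real"
  assumes hp: "p \<ge> 2"
    and hR: "0 < R"
    and htheta: "\<theta> \<ge> p - 1"
    and hnu: "0 \<le> \<nu>" "\<nu> < lambda1 p (p - 1) \<theta> R"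
    and hX: "\<And>\<epsilon>. 0 < \<epsilon> \<Longrightarrow> \<epsilon> < mu (p - 1) \<theta> \<Longrightarrow> u \<epsilon> \<in> Xsp p (p - 1) \<theta> R"
    and hC1: "\<And>\<epsilon>. 0 < \<epsilon> \<Longrightarrow> \<epsilon> < mu (p - 1) \<theta> \<Longrightarrow>
       \<exists>u'. continuous_on {0..R} u' \<and>
            (\<forall>r\<in>{0..R}. (u \<epsilon> has_real_derivative u' r) (at r within {0..R}))"
    and hnonneg: "\<And>\<epsilon> r. 0 < \<epsilon> \<Longrightarrow> \<epsilon> < mu (p - 1) \<theta> \<Longrightarrow> r \<in> {0..R} \<Longrightarrow> 0 \<le> u \<epsilon> r"
    and hnoninc: "\<And>\<epsilon> r s. 0 < \<epsilon> \<Longrightarrow> \<epsilon> < mu (p - 1) \<theta> \<Longrightarrow> 0 \<le> r \<Longrightarrow> r \<le> s \<Longrightarrow> s \<le> R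
       \<Longrightarrow> u \<epsilon> s \<le> u \<epsilon> r"
    and hH: "\<And>\<epsilon>. 0 < \<epsilon> \<Longrightarrow> \<epsilon> < mu (p - 1) \<theta> \<Longrightarrow> H p (p - 1) \<theta> R \<nu> (u \<epsilon>) = 1"
    and hmax: "\<And>\<epsilon>. 0 < \<epsilon> \<Longrightarrow> \<epsilon> < mu (p - 1) \<theta> \<Longrightarrow>
       (\<integral>\<^sup>+ r. ennreal (exp ((mu (p - 1) \<theta> - \<epsilon>) * \<bar>u \<epsilon> r\<bar> powr (p / (p - 1)))) \<partial>lam \<theta> R)
         = S p \<nu> \<theta> R \<epsilon>"
    and hSfin: "\<And>\<epsilon>. 0 < \<epsilon> \<Longrightarrow> \<epsilon> < mu (p - 1) \<theta> \<Longrightarrow> S p \<nu> \<theta> R \<epsilon> < \<infinity>"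
    and he: "\<And>n. 0 < e n" "\<And>n. e n < mu (p - 1) \<theta>" "e \<longlonglongrightarrow> 0"
    and hLq: "\<And>q. q > 1 \<Longrightarrow> (\<lambda>n. Lpow q \<theta> R (u (e n))) \<longlonglongrightarrow> 0"
    and hblow: "filterlim (\<lambda>n. u (e n) 0) at_top sequentially"
  shows "(\<forall>\<eta> < mu (p - 1) \<theta>.
      (\<lambda>n. let \<epsilon> = e n; a = u \<epsilon> 0;
               lam\<epsilon> = integral\<^sup>L (lam \<theta> R) (\<lambda>r. exp ((mu (p - 1) \<theta> - \<epsilon>) * u \<epsilon> r powr (p / (p - 1)))
                                           * u \<epsilon> r powr (p / (p - 1)));
               r\<theta> = lam\<epsilon> / (a powr (p / (p - 1)) * exp ((mu (p - 1) \<theta> - \<epsilon>) * a powr (p / (p - 1))))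
           in r\<theta> * a powr (p / (p - 1)) * exp (\<eta> * a powr (p / (p - 1)))) \<longlonglongrightarrow> 0)
    \<and> (\<lambda>n. let \<epsilon> = e n; a = u \<epsilon> 0;
               lam\<epsilon> = integral\<^sup>L (lam \<theta> R) (\<lambda>r. exp ((mu (p - 1) \<theta> - \<epsilon>) * u \<epsilon> r powr (p / (p - 1)))
                                           * u \<epsilon> r powr (p / (p - 1)))
           in lam\<epsilon> / (a powr (p / (p - 1)) * exp ((mu (p - 1) \<theta> - \<epsilon>) * a powr (p / (p - 1))))) \<longlonglongrightarrow> 0"
proof -
  define q where "q = p / (p - 1)"
  define \<mu> where "\<mu> = mu (p - 1) \<theta>"
  have q1: "1 < q" using hp unfolding q_def by (simp add: field_simps)
  have \<mu>pos: "0 < \<mu>" using he(1)[of 0] he(2)[of 0] unfolding \<mu>_def by linarith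
  define U where "U n = u (e n)" for n
  define a where "a n = U n 0" for n
  define m where "m n = \<mu> - e n" for n
  have sp: "space (lam \<theta> R) = {0<..<R}" by (simp add: lam_def)
  have setsl: "sets (lam \<theta> R) = sets (lebesgue_on {0<..<R})" by (simp add: lam_def)
  have en: "0 < e n" "e n < \<mu>" for n using he unfolding \<mu>_def by auto
  have Xn: "U n \<in> Xsp p (p - 1) \<theta> R" for n unfolding U_def using hX en \<mu>_def by auto
  have cont: "continuous_on {0..R} (U n)" for n
  proof -
    obtain u' where "\<forall>r\<in>{0..R}. (U n has_real_derivative u' r) (at r within {0..R})"
      using hC1[of "e n"] en unfolding U_def \<mu>_def by auto
    then show ?thesis
      unfolding continuous_on_eq_continuous_within using DERIV_continuous by blast
  qed
  have meas: "U n \<in> borel_measurable (lam \<theta> R)" for n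
  proof -
    have "U n \<in> borel_measurable (lebesgue_on {0<..<R})"
      by (rule continuous_imp_measurable_on_sets_lebesgue)
         (use cont[of n] in \<open>auto intro: continuous_on_subset\<close>)
    then show ?thesis using measurable_cong_sets[OF setsl refl, of borel] by metis
  qed
  have bnds: "0 \<le> U n r \<and> U n r \<le> a n" if "r \<in> space (lam \<theta> R)" for n r
    using that sp hnonneg[of "e n" r] hnoninc[of "e n" 0 r] en unfolding U_def a_def \<mu>_def by auto
  have fin: "finite_measure (lam \<theta> R)"
  proof
    have "emeasure (lam \<theta> R) (space (lam \<theta> R)) = (\<integral>\<^sup>+ r. ennreal 1 \<partial>lam \<theta> R)"
      by (simp add: nn_integral_const)
    also have "\<dots> \<le> (\<integral>\<^sup>+ r. ennreal (exp ((mu (p - 1) \<theta> - e 0) * \<bar>u (e 0) r\<bar> powr (p / (p - 1)))) \<partial>lam \<theta> R)"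
    proof (rule nn_integral_mono)
      fix r
      have "0 \<le> (mu (p - 1) \<theta> - e 0) * \<bar>u (e 0) r\<bar> powr (p / (p - 1))"
        using en[of 0] unfolding \<mu>_def by simp
      then show "ennreal 1 \<le> ennreal (exp ((mu (p - 1) \<theta> - e 0) * \<bar>u (e 0) r\<bar> powr (p / (p - 1))))"
        by (intro ennreal_leI) simp
    qed
    also have "\<dots> = S p \<nu> \<theta> R (e 0)" using hmax en[of 0] unfolding \<mu>_def by auto
    also have "\<dots> < \<infinity>" using hSfin en[of 0] unfolding \<mu>_def by auto
    finally show "emeasure (lam \<theta> R) (space (lam \<theta> R)) \<noteq> \<infinity>" by simp
  qed
  have Hle: "(\<integral>\<^sup>+ r. ennreal (exp ((mu (p - 1) \<theta> - \<epsilon>0) * \<bar>U n r\<bar> powr (p / (p - 1)))) \<partial>lam \<theta> R)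
      \<le> S p \<nu> \<theta> R \<epsilon>0" for n \<epsilon>0
    unfolding S_def
    by (rule SUP_upper) (use Xn[of n] hH[of "e n"] en[of n] in \<open>auto simp: U_def \<mu>_def\<close>)
  have Lq: "(\<lambda>n. integral\<^sup>L (lam \<theta> R) (\<lambda>r. \<bar>U n r\<bar> powr q)) \<longlonglongrightarrow> 0"
    using hLq[OF q1] unfolding Lpow_def U_def by simp
  have ainf: "filterlim a at_top sequentially" using hblow unfolding a_def U_def by simp
  have apos: "eventually (\<lambda>n. 1 \<le> a n) sequentially"
    using ainf by (simp add: filterlim_at_top)
  define L where "L n = integral\<^sup>L (lam \<theta> R) (\<lambda>r. exp (m n * U n r powr q) * U n r powr q)" for n
  define Q where "Q \<eta> n = L n / (a n powr q * exp (m n * a n powr q)) * a n powr q * exp (\<eta> * a n powr q)" for \<eta> n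
  have main: "(\<lambda>n. Q \<eta> n) \<longlonglongrightarrow> 0" if \<eta>: "\<eta> < \<mu>" for \<eta>
  proof -
    define \<eta>' where "\<eta>' = (max \<eta> 0 + \<mu>) / 2"
    define \<gamma> where "\<gamma> = \<eta>' - \<eta>"
    define \<epsilon>0 where "\<epsilon>0 = \<mu> - \<eta>'"
    have \<gamma>: "0 < \<gamma>" unfolding \<gamma>_def \<eta>'_def using \<eta> \<mu>pos by auto
    have \<epsilon>0: "0 < \<epsilon>0" "\<epsilon>0 < \<mu>" unfolding \<epsilon>0_def \<eta>'_def using \<eta> \<mu>pos by auto
    define B where "B = enn2real (S p \<nu> \<theta> R \<epsilon>0)"
    have SB: "S p \<nu> \<theta> R \<epsilon>0 = ennreal B"
      unfolding B_def using hSfin[of \<epsilon>0] \<epsilon>0 unfolding \<mu>_def by (simp add: ennreal_enn2real less_top)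
    have B0: "0 \<le> B" unfolding B_def by simp
    have eg: "\<eta> + \<gamma> = mu (p - 1) \<theta> - \<epsilon>0" unfolding \<gamma>_def \<epsilon>0_def \<mu>_def by simp
    have ev1: "eventually (\<lambda>n. e n < \<mu> - \<eta>) sequentially"
      using he(3) \<eta> by (intro order_tendstoD(2)) auto
    have bound: "eventually (\<lambda>n. Q \<eta> n \<le> exp (\<bar>\<eta>\<bar> * Mb) * integral\<^sup>L (lam \<theta> R) (\<lambda>r. \<bar>U n r\<bar> powr q)
          + 4 / (\<gamma>^2 * Mb) * B) sequentially" if Mb: "0 < Mb" for Mb
      using ev1 apos
    proof eventually_elim
      case (elim n)
      have "\<eta> \<le> m n" using elim unfolding m_def by simp
      moreover have "integral\<^sup>N (lam \<theta> R) (\<lambda>x. ennreal (exp ((\<eta> + \<gamma>) * \<bar>U n x\<bar> powr q))) \<le> ennreal B"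
        using Hle[of \<epsilon>0 n] unfolding eg SB q_def .
      ultimately show ?case unfolding Q_def L_def
        by (intro keyB[OF fin meas bnds]) (use elim q1 \<gamma> Mb B0 in auto)
    qed
    have nonneg: "eventually (\<lambda>n. 0 \<le> Q \<eta> n) sequentially"
      using apos
    proof eventually_elim
      case (elim n)
      have "0 \<le> L n" unfolding L_def by (intro Bochner_Integration.integral_nonneg) simp
      then show ?case unfolding Q_def using elim by simp
    qed
    show ?thesis
    proof (rule order_tendstoI)
      fix y :: real assume y: "y < 0"
      show "eventually (\<lambda>n. y < Q \<eta> n) sequentially"
        using nonneg by (rule eventually_mono) (use y in auto)
    next
      fix \<delta> :: real assume \<delta>: "0 < \<delta>"
      define Mb where "Mb = 8 * B / (\<gamma>^2 * \<delta>) + 1"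
      have "0 \<le> 8 * B / (\<gamma>^2 * \<delta>)" using B0 \<gamma> \<delta> by simp
      then have Mb0: "0 < Mb" unfolding Mb_def by linarith
      have small: "4 / (\<gamma>^2 * Mb) * B < \<delta> / 2"
      proof -
        have "\<gamma>^2 * Mb * \<delta> = 8 * B + \<gamma>^2 * \<delta>" unfolding Mb_def using \<gamma> \<delta> by (simp add: field_simps)
        then have "8 * B < \<gamma>^2 * Mb * \<delta>" using \<gamma> \<delta> by simp
        then show ?thesis using \<gamma> Mb0 by (simp add: field_simps)
      qed
      have lim: "(\<lambda>n. exp (\<bar>\<eta>\<bar> * Mb) * integral\<^sup>L (lam \<theta> R) (\<lambda>r. \<bar>U n r\<bar> powr q)) \<longlonglongrightarrow> 0"
        using tendsto_mult_right_zero[OF Lq] by simp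
      have "eventually (\<lambda>n. exp (\<bar>\<eta>\<bar> * Mb) * integral\<^sup>L (lam \<theta> R) (\<lambda>r. \<bar>U n r\<bar> powr q) < \<delta> / 2) sequentially"
        using order_tendstoD(2)[OF lim, of "\<delta> / 2"] \<delta> by simp
      then show "eventually (\<lambda>n. Q \<eta> n < \<delta>) sequentially"
        using bound[OF Mb0] by eventually_elim (use small in linarith)
    qed
  qed
  have main2: "(\<lambda>n. L n / (a n powr q * exp (m n * a n powr q))) \<longlonglongrightarrow> 0"
  proof (rule tendsto_sandwich[OF _ _ tendsto_const main[of 0]])
    show "eventually (\<lambda>n. 0 \<le> L n / (a n powr q * exp (m n * a n powr q))) sequentially"
      using apos
    proof eventually_elim
      case (elim n)
      have "0 \<le> L n" unfolding L_def by (intro Bochner_Integration.integral_nonneg) simp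
      then show ?case using elim by simp
    qed
    show "eventually (\<lambda>n. L n / (a n powr q * exp (m n * a n powr q)) \<le> Q 0 n) sequentially"
      using apos
    proof eventually_elim
      case (elim n)
      have "0 \<le> L n" unfolding L_def by (intro Bochner_Integration.integral_nonneg) simp
      then have r0: "0 \<le> L n / (a n powr q * exp (m n * a n powr q))" using elim by simp
      have a1: "1 \<le> a n powr q" using elim q1 by (simp add: ge_one_powr_ge_zero)
      have "Q 0 n = L n / (a n powr q * exp (m n * a n powr q)) * a n powr q" unfolding Q_def by simp
      moreover have "L n / (a n powr q * exp (m n * a n powr q)) \<le> L n / (a n powr q * exp (m n * a n powr q)) * a n powr q"
        using mult_left_mono[OF a1 r0] by simp
      ultimately show ?case by simp
    qed
  qed (use \<mu>pos in simp)
  show ?thesis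
    using main main2 unfolding Q_def L_def m_def a_def U_def q_def \<mu>_def Let_def by simp
qed

end
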